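(* Let $Z\subset\mathbb{S}_2$ be a finite nonempty set of points. Then the following are equivalent: (i) $Z=\{Q\}$ for a single point $Q\in(E_1\cup E_2)\setminus\widetilde{L_{12}}$; (ii) $\alpha(Z)=\alpha(2Z)=\alpha(3Z)=\alpha(4Z)=1$ and $\alpha(5Z)>1$.
   Context: Let $P_1,P_2\in\mathbb{P}^2(\mathbb{C})$ be two general (distinct) points and $f\colon\mathbb{S}_2\to\mathbb{P}^2$ the blow-up at them, with exceptional curves $E_i=f^{-1}(P_i)$; let $H$ be the pullback of the class of a line and $\mathbb{L}_2=3H-E_1-E_2=-K_{\mathbb{S}_2}$. $L_{12}$ is the line through $P_1,P_2$ and $\widetilde{L_{12}}$ its proper transform in $\mathbb{S}_2$. For a finite set $Z\subset\mathbb{S}_2$ with ideal sheaf $\mathcal{I}_Z$ and a positive integer $m$, $\alpha(mZ)=\min\{d\ge 0:\ H^0(\mathbb{S}_2,d\mathbb{L}_2\otimes\mathcal{I}_Z^{(m)})\neq 0\}$, i.e. the least $d$ such that some effective divisor $D\in|d\mathbb{L}_2|$ has multiplicity at least $m$ at every point of $Z$. *)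

theory Defs
  imports "HOL-Analysis.Analysis"
begin

text \<open>Coordinates: P1 = [1:0:0], P2 = [0:1:0], so the line L12 is z = 0.
  Points of P^2 are represented by normalized representatives in C^3 (first nonzero
  coordinate equal to 1), points of P^1 (directions) by normalized pairs.\<close>

type_synonym c3 = "complex \<times> complex \<times> complex"

definition normP2 :: "c3 \<Rightarrow> bool" where
  "normP2 p \<longleftrightarrow> (case p of (x, y, z) \<Rightarrow>
      x = 1 \<or> (x = 0 \<and> y = 1) \<or> (x = 0 \<and> y = 0 \<and> z = 1))"

definition normP1 :: "complex \<times> complex \<Rightarrow> bool" where
  "normP1 w \<longleftrightarrow> (case w of (b, c) \<Rightarrow> b = 1 \<or> (b = 0 \<and> c = 1))"

definition P1 :: c3 where "P1 = (1, 0, 0)"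
definition P2 :: c3 where "P2 = (0, 1, 0)"

text \<open>Points of the blow-up S_2: points of P^2 other than P1, P2, and points of the
  exceptional curves E1, E2 (tangent directions at P1, P2).\<close>
datatype s2pt = Pt c3 | Ex1 "complex \<times> complex" | Ex2 "complex \<times> complex"

definition S2 :: "s2pt set" where
  "S2 = {Pt p | p. normP2 p \<and> p \<noteq> P1 \<and> p \<noteq> P2}
        \<union> {Ex1 w | w. normP1 w} \<union> {Ex2 w | w. normP1 w}"

definition E1 :: "s2pt set" where "E1 = {Ex1 w | w. normP1 w}"
definition E2 :: "s2pt set" where "E2 = {Ex2 w | w. normP1 w}"

text \<open>Proper transform of the line z = 0 through P1, P2: its points off P1, P2 and the
  points of E1, E2 corresponding to the direction of L12 at P1 (resp. P2).\<close>
definition L12t :: "s2pt set" where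
  "L12t = {Pt p | p. normP2 p \<and> p \<noteq> P1 \<and> p \<noteq> P2 \<and> snd (snd p) = 0}
          \<union> {Ex1 (1, 0), Ex2 (1, 0)}"

definition hom_eval :: "nat \<Rightarrow> (nat \<Rightarrow> nat \<Rightarrow> complex) \<Rightarrow> c3 \<Rightarrow> complex" where
  "hom_eval n c p = (case p of (x, y, z) \<Rightarrow>
      (\<Sum>i\<le>n. \<Sum>j\<le>n - i. c i j * x ^ i * y ^ j * z ^ (n - i - j)))"

definition hom_nonzero :: "nat \<Rightarrow> (nat \<Rightarrow> nat \<Rightarrow> complex) \<Rightarrow> bool" where
  "hom_nonzero n c \<longleftrightarrow> (\<exists>i j. i + j \<le> n \<and> c i j \<noteq> 0)"

text \<open>A function g (a local equation, centred at the point 0) vanishes to order at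
  least m at 0, i.e. has multiplicity at least m there.\<close>
definition ord_ge :: "('a::real_normed_vector \<Rightarrow> complex) \<Rightarrow> nat \<Rightarrow> bool" where
  "ord_ge g m \<longleftrightarrow> (\<exists>C. eventually (\<lambda>h. norm (g h) \<le> C * norm h ^ m) (at 0))"

definition smul3 :: "complex \<Rightarrow> c3 \<Rightarrow> c3" where
  "smul3 a p = (case p of (x, y, z) \<Rightarrow> (a * x, a * y, a * z))"

text \<open>Direction vectors at P1 / P2 for a normalized direction (b,c), and a complementary
  vector used for the standard blow-up chart.\<close>
definition dir1 :: "complex \<times> complex \<Rightarrow> c3" where "dir1 w = (0, fst w, snd w)"
definition cmp1 :: "complex \<times> complex \<Rightarrow> c3" where
  "cmp1 w = (if fst w = 1 then (0, 0, 1) else (0, 1, 0))"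
definition dir2 :: "complex \<times> complex \<Rightarrow> c3" where "dir2 w = (fst w, 0, snd w)"
definition cmp2 :: "complex \<times> complex \<Rightarrow> c3" where
  "cmp2 w = (if fst w = 1 then (0, 0, 1) else (1, 0, 0))"

text \<open>Multiplicity (at least m) at a point Q of S_2 of the divisor
  D = f^*C - d E1 - d E2 in |d L_2| given by the form F of degree 3d.
  Off E1, E2 this is the multiplicity of the curve C = (F = 0) (computed on the cone,
  which has the same multiplicity at a nonzero point); on E_i we use the standard
  blow-up chart (s,t) -> P_i + s (w + t u) and the local equation F(...)/s^d.\<close>
fun mult_ge :: "nat \<Rightarrow> (nat \<Rightarrow> nat \<Rightarrow> complex) \<Rightarrow> s2pt \<Rightarrow> nat \<Rightarrow> bool" where
  "mult_ge d c (Pt p) m = ord_ge (\<lambda>h. hom_eval (3 * d) c (p + h)) m"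
| "mult_ge d c (Ex1 w) m = ord_ge (\<lambda>(s, t).
      hom_eval (3 * d) c (P1 + smul3 s (dir1 w) + smul3 (s * t) (cmp1 w)) / s ^ d) m"
| "mult_ge d c (Ex2 w) m = ord_ge (\<lambda>(s, t).
      hom_eval (3 * d) c (P2 + smul3 s (dir2 w) + smul3 (s * t) (cmp2 w)) / s ^ d) m"

text \<open>Nonzero sections of d L_2 = 3dH - dE1 - dE2: nonzero forms of degree 3d with
  multiplicity at least d at P1 and P2.\<close>
definition section_dL :: "nat \<Rightarrow> (nat \<Rightarrow> nat \<Rightarrow> complex) \<Rightarrow> bool" where
  "section_dL d c \<longleftrightarrow> hom_nonzero (3 * d) c
      \<and> ord_ge (\<lambda>h. hom_eval (3 * d) c (P1 + h)) d
      \<and> ord_ge (\<lambda>h. hom_eval (3 * d) c (P2 + h)) d"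

definition alpha :: "nat \<Rightarrow> s2pt set \<Rightarrow> nat" where
  "alpha m Z = (LEAST d. \<exists>c. section_dL d c \<and> (\<forall>Q\<in>Z. mult_ge d c Q m))"

end

theory Submission
  imports Defs
begin


lemma hom3: "hom_eval 3 c (x,y,z) = c 0 0 * z^3 + c 0 1 * y * z^2 + c 0 2 * y^2 * z + c 0 3 * y^3
  + c 1 0 * x * z^2 + c 1 1 * x*y*z + c 1 2 * x*y^2 + c 2 0 * x^2*z + c 2 1 * x^2*y + c 3 0 * x^3"
  by (simp add: hom_eval_def numeral_3_eq_3 atMost_Suc algebra_simps numeral_2_eq_2)

lemma coeff_vanish:
  fixes p :: "complex poly"
  assumes "eventually (\<lambda>x. norm (poly p x) \<le> C * norm x ^ m) (at 0)" "k < m"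
  shows "coeff p k = 0"
  using assms
proof (induction m arbitrary: p C k)
  case 0 then show ?case by simp
next
  case (Suc m)
  have l1: "(poly p \<longlongrightarrow> poly p 0) (at 0)"
    by (simp add: isCont_def[symmetric])
  have l0: "((\<lambda>x. C * norm x ^ Suc m) \<longlongrightarrow> 0) (at (0::complex))"
    by (auto intro!: tendsto_eq_intros)
  have l2: "(poly p \<longlongrightarrow> 0) (at 0)"
    by (rule Lim_null_comparison[OF Suc.prems(1) l0])
  have p0: "poly p 0 = 0" using tendsto_unique[OF _ l1 l2] by simp
  obtain a q where pq: "p = pCons a q" by (cases p) auto
  have a0: "a = 0" using p0 pq by simp
  have "eventually (\<lambda>x. norm (poly q x) \<le> C * norm x ^ m) (at 0)"
    using Suc.prems(1) eventually_at_filter[of "\<lambda>x. x \<noteq> (0::complex)"]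
  proof -
    have ev0: "eventually (\<lambda>x. x \<noteq> (0::complex)) (at 0)" by (simp add: eventually_at_filter)
    show ?thesis using Suc.prems(1) ev0
    proof eventually_elim
      case (elim x)
      have "norm x * norm (poly q x) \<le> norm x * (C * norm x ^ m)"
        using elim(1) by (simp add: pq a0 norm_mult algebra_simps)
      then show ?case using elim(2) by simp
    qed
  qed
  note IH = Suc.IH[OF this]
  show ?case
  proof (cases k)
    case 0 then show ?thesis using pq a0 by simp
  next
    case (Suc k') then show ?thesis using pq IH[of k'] \<open>k < Suc m\<close> by simp
  qed
qed

lemma line_restrict:
  fixes g :: "'a::real_normed_vector \<Rightarrow> complex" and \<phi> :: "complex \<Rightarrow> 'a"
  assumes "ord_ge g m" "\<And>x. norm (\<phi> x) = norm x * K" "K > 0"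
  shows "\<exists>C. eventually (\<lambda>x. norm (g (\<phi> x)) \<le> C * norm x ^ m) (at 0)"
proof -
  obtain C where ev: "eventually (\<lambda>h. norm (g h) \<le> C * norm h ^ m) (at 0)"
    using assms(1) unfolding ord_ge_def by blast
  have t: "(\<phi> \<longlongrightarrow> 0) (at 0)"
  proof -
    have "((\<lambda>x. norm (\<phi> x)) \<longlongrightarrow> 0) (at 0)"
      unfolding assms(2) by (auto intro!: tendsto_eq_intros)
    then show ?thesis by (simp add: tendsto_norm_zero_iff)
  qed
  have ne: "eventually (\<lambda>x. \<phi> x \<noteq> 0) (at 0)"
  proof -
    have "eventually (\<lambda>x. x \<noteq> (0::complex)) (at 0)" by (simp add: eventually_at_filter)
    then show ?thesis
      by eventually_elim (metis assms(2,3) mult_eq_0_iff norm_eq_zero order_less_irrefl)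
  qed
  have fl: "filterlim \<phi> (at 0) (at 0)"
    using t ne by (simp add: filterlim_at)
  have "eventually (\<lambda>x. norm (g (\<phi> x)) \<le> C * norm (\<phi> x) ^ m) (at 0)"
    using eventually_compose_filterlim[OF ev fl] .
  then have "eventually (\<lambda>x. norm (g (\<phi> x)) \<le> (C * K ^ m) * norm x ^ m) (at 0)"
    by eventually_elim (simp add: assms(2) power_mult_distrib algebra_simps)
  then show ?thesis by blast
qed



lemma norm_line2: "norm (x, x*u) = norm x * sqrt (1 + norm (u::complex) ^ 2)"
proof -
  have "norm (x*u) = norm x * norm u" by (rule norm_mult)
  then have "norm (x, x*u) = sqrt (norm x ^ 2 * (1 + norm u ^ 2))"
    by (simp add: norm_Pair power_mult_distrib algebra_simps)
  also have "\<dots> = norm x * sqrt (1 + norm u ^ 2)"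
    by (simp add: real_sqrt_mult)
  finally show ?thesis .
qed

lemma extract2:
  fixes G :: "complex \<times> complex \<Rightarrow> complex"
  assumes "ord_ge G m" "\<And>x. x \<noteq> 0 \<Longrightarrow> G (x, x*u) = poly P x" "k < m"
  shows "coeff P k = 0"
proof -
  obtain C where ev: "eventually (\<lambda>x. norm (G (x, x*u)) \<le> C * norm x ^ m) (at 0)"
    using line_restrict[OF assms(1), of "\<lambda>x. (x, x*u)" "sqrt (1 + norm u ^ 2)"] norm_line2
    by (smt (verit, ccfv_SIG) real_sqrt_gt_zero zero_le_power2)
  have ev0: "eventually (\<lambda>x. x \<noteq> (0::complex)) (at 0)" by (simp add: eventually_at_filter)
  have "eventually (\<lambda>x. norm (poly P x) \<le> C * norm x ^ m) (at 0)"
    using ev ev0 by eventually_elim (simp add: assms(2))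
  then show ?thesis using coeff_vanish assms(3) by blast
qed

lemma e1a_coeffs:
  assumes "mult_ge 1 c (Ex1 (1,a)) m" "c 3 0 = 0" "k < m"
  shows "coeff [:((c 2 0) * a + (c 2 1)), ((c 1 0) * a ^ 2 + (c 1 1) * a + (c 1 2) + (c 2 0) * u), ((c 0 0) * a ^ 3 + (c 0 1) * a ^ 2 + (c 0 2) * a + (c 0 3) + 2 * (c 1 0) * a * u + (c 1 1) * u), (3 * (c 0 0) * a ^ 2 * u + 2 * (c 0 1) * a * u + (c 0 2) * u + (c 1 0) * u ^ 2), (3 * (c 0 0) * a * u ^ 2 + (c 0 1) * u ^ 2), ((c 0 0) * u ^ 3):] k = 0"
proof (rule extract2[OF _ _ assms(3)])
  show "ord_ge (\<lambda>(s,t). hom_eval 3 c (P1 + smul3 s (dir1 (1,a)) + smul3 (s*t) (cmp1 (1,a))) / s) m"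
    using assms(1) by simp
  fix x :: complex assume "x \<noteq> 0"
  then show "(\<lambda>(s,t). hom_eval 3 c (P1 + smul3 s (dir1 (1,a)) + smul3 (s*t) (cmp1 (1,a))) / s) (x, x*u) = poly [:((c 2 0) * a + (c 2 1)), ((c 1 0) * a ^ 2 + (c 1 1) * a + (c 1 2) + (c 2 0) * u), ((c 0 0) * a ^ 3 + (c 0 1) * a ^ 2 + (c 0 2) * a + (c 0 3) + 2 * (c 1 0) * a * u + (c 1 1) * u), (3 * (c 0 0) * a ^ 2 * u + 2 * (c 0 1) * a * u + (c 0 2) * u + (c 1 0) * u ^ 2), (3 * (c 0 0) * a * u ^ 2 + (c 0 1) * u ^ 2), ((c 0 0) * u ^ 3):] x"
    using assms(2) by (simp add: hom3 P1_def P2_def smul3_def dir1_def cmp1_def dir2_def cmp2_def divide_eq_eq) (simp add: algebra_simps power2_eq_square power3_eq_cube power4_eq_xxxx)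
qed

lemma e1b_coeffs:
  assumes "mult_ge 1 c (Ex1 (0,1)) m" "c 3 0 = 0" "k < m"
  shows "coeff [:((c 2 0)), ((c 1 0) + (c 2 1) * u), ((c 0 0) + (c 1 1) * u), ((c 0 1) * u + (c 1 2) * u ^ 2), ((c 0 2) * u ^ 2), ((c 0 3) * u ^ 3):] k = 0"
proof (rule extract2[OF _ _ assms(3)])
  show "ord_ge (\<lambda>(s,t). hom_eval 3 c (P1 + smul3 s (dir1 (0,1)) + smul3 (s*t) (cmp1 (0,1))) / s) m"
    using assms(1) by simp
  fix x :: complex assume "x \<noteq> 0"
  then show "(\<lambda>(s,t). hom_eval 3 c (P1 + smul3 s (dir1 (0,1)) + smul3 (s*t) (cmp1 (0,1))) / s) (x, x*u) = poly [:((c 2 0)), ((c 1 0) + (c 2 1) * u), ((c 0 0) + (c 1 1) * u), ((c 0 1) * u + (c 1 2) * u ^ 2), ((c 0 2) * u ^ 2), ((c 0 3) * u ^ 3):] x"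
    using assms(2) by (simp add: hom3 P1_def P2_def smul3_def dir1_def cmp1_def dir2_def cmp2_def divide_eq_eq) (simp add: algebra_simps power2_eq_square power3_eq_cube power4_eq_xxxx)
qed

lemma e2a_coeffs:
  assumes "mult_ge 1 c (Ex2 (1,a)) m" "c 0 3 = 0" "k < m"
  shows "coeff [:((c 0 2) * a + (c 1 2)), ((c 0 1) * a ^ 2 + (c 0 2) * u + (c 1 1) * a + (c 2 1)), ((c 0 0) * a ^ 3 + 2 * (c 0 1) * a * u + (c 1 0) * a ^ 2 + (c 1 1) * u + (c 2 0) * a + (c 3 0)), (3 * (c 0 0) * a ^ 2 * u + (c 0 1) * u ^ 2 + 2 * (c 1 0) * a * u + (c 2 0) * u), (3 * (c 0 0) * a * u ^ 2 + (c 1 0) * u ^ 2), ((c 0 0) * u ^ 3):] k = 0"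
proof (rule extract2[OF _ _ assms(3)])
  show "ord_ge (\<lambda>(s,t). hom_eval 3 c (P2 + smul3 s (dir2 (1,a)) + smul3 (s*t) (cmp2 (1,a))) / s) m"
    using assms(1) by simp
  fix x :: complex assume "x \<noteq> 0"
  then show "(\<lambda>(s,t). hom_eval 3 c (P2 + smul3 s (dir2 (1,a)) + smul3 (s*t) (cmp2 (1,a))) / s) (x, x*u) = poly [:((c 0 2) * a + (c 1 2)), ((c 0 1) * a ^ 2 + (c 0 2) * u + (c 1 1) * a + (c 2 1)), ((c 0 0) * a ^ 3 + 2 * (c 0 1) * a * u + (c 1 0) * a ^ 2 + (c 1 1) * u + (c 2 0) * a + (c 3 0)), (3 * (c 0 0) * a ^ 2 * u + (c 0 1) * u ^ 2 + 2 * (c 1 0) * a * u + (c 2 0) * u), (3 * (c 0 0) * a * u ^ 2 + (c 1 0) * u ^ 2), ((c 0 0) * u ^ 3):] x"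
    using assms(2) by (simp add: hom3 P1_def P2_def smul3_def dir1_def cmp1_def dir2_def cmp2_def divide_eq_eq) (simp add: algebra_simps power2_eq_square power3_eq_cube power4_eq_xxxx)
qed

lemma e2b_coeffs:
  assumes "mult_ge 1 c (Ex2 (0,1)) m" "c 0 3 = 0" "k < m"
  shows "coeff [:((c 0 2)), ((c 0 1) + (c 1 2) * u), ((c 0 0) + (c 1 1) * u), ((c 1 0) * u + (c 2 1) * u ^ 2), ((c 2 0) * u ^ 2), ((c 3 0) * u ^ 3):] k = 0"
proof (rule extract2[OF _ _ assms(3)])
  show "ord_ge (\<lambda>(s,t). hom_eval 3 c (P2 + smul3 s (dir2 (0,1)) + smul3 (s*t) (cmp2 (0,1))) / s) m"
    using assms(1) by simp
  fix x :: complex assume "x \<noteq> 0"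
  then show "(\<lambda>(s,t). hom_eval 3 c (P2 + smul3 s (dir2 (0,1)) + smul3 (s*t) (cmp2 (0,1))) / s) (x, x*u) = poly [:((c 0 2)), ((c 0 1) + (c 1 2) * u), ((c 0 0) + (c 1 1) * u), ((c 1 0) * u + (c 2 1) * u ^ 2), ((c 2 0) * u ^ 2), ((c 3 0) * u ^ 3):] x"
    using assms(2) by (simp add: hom3 P1_def P2_def smul3_def dir1_def cmp1_def dir2_def cmp2_def divide_eq_eq) (simp add: algebra_simps power2_eq_square power3_eq_cube power4_eq_xxxx)
qed



lemma norm_line3: "norm (x*e1, x*e2, x*e3) = norm (x::complex) * norm (e1,e2,e3)"
proof -
  have "norm (x*e1, x*e2, x*e3) = sqrt (norm x ^ 2 * (norm e1 ^ 2 + norm e2 ^ 2 + norm e3 ^ 2))"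
    by (simp add: norm_Pair norm_mult power_mult_distrib algebra_simps)
  also have "\<dots> = norm x * norm (e1,e2,e3)"
    by (simp add: real_sqrt_mult norm_Pair add.assoc)
  finally show ?thesis .
qed

lemma extract3:
  fixes G :: "c3 \<Rightarrow> complex"
  assumes "ord_ge G m" "(e1,e2,e3) \<noteq> 0" "\<And>x. x \<noteq> 0 \<Longrightarrow> G (x*e1, x*e2, x*e3) = poly P x" "k < m"
  shows "coeff P k = 0"
proof -
  have K: "norm (e1,e2,e3) > 0" using assms(2) by simp
  obtain C where ev: "eventually (\<lambda>x. norm (G (x*e1, x*e2, x*e3)) \<le> C * norm x ^ m) (at 0)"
    using line_restrict[OF assms(1), of "\<lambda>x. (x*e1, x*e2, x*e3)" "norm (e1,e2,e3)"] norm_line3 K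
    by blast
  have ev0: "eventually (\<lambda>x. x \<noteq> (0::complex)) (at 0)" by (simp add: eventually_at_filter)
  have "eventually (\<lambda>x. norm (poly P x) \<le> C * norm x ^ m) (at 0)"
    using ev ev0 by eventually_elim (simp add: assms(3))
  then show ?thesis using coeff_vanish assms(4) by blast
qed

lemma hom_line_poly:
  "\<exists>P. degree P \<le> n \<and> (\<forall>x. hom_eval n c ((p1,p2,p3) + (x*e1, x*e2, x*e3)) = poly P x)"
proof -
  define A where "A = [:p1,e1:]"
  define B where "B = [:p2,e2:]"
  define D where "D = [:p3,e3:]"
  define P where "P = (\<Sum>i\<le>n. \<Sum>j\<le>n - i. smult (c i j) (A^i * B^j * D^(n-i-j)))"
  have "degree P \<le> n"
    unfolding P_def
  proof (intro degree_sum_le)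
    fix i j assume ij: "i \<in> {..n}" "j \<in> {..n - i}"
    have dA: "degree A \<le> 1" "degree B \<le> 1" "degree D \<le> 1" by (simp_all add: A_def B_def D_def)
    have "degree (smult (c i j) (A^i * B^j * D^(n-i-j))) \<le> degree (A^i * B^j * D^(n-i-j))"
      by (rule degree_smult_le)
    also have "\<dots> \<le> degree (A^i) + degree (B^j) + degree (D^(n-i-j))"
      by (meson add_le_mono degree_mult_le dual_order.trans le_refl)
    also have "\<dots> \<le> i + j + (n-i-j)"
      using dA degree_power_le[of A i] degree_power_le[of B j] degree_power_le[of D "n-i-j"]
      by (intro add_mono) (auto intro: order_trans mult_le_mono)
    also have "\<dots> = n" using ij by auto
    finally show "degree (smult (c i j) (A^i * B^j * D^(n-i-j))) \<le> n" .
  qed auto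
  moreover have "\<forall>x. hom_eval n c ((p1,p2,p3) + (x*e1, x*e2, x*e3)) = poly P x"
    by (simp add: P_def hom_eval_def poly_sum A_def B_def D_def algebra_simps)
  ultimately show ?thesis by blast
qed

lemma hom3_vanish_dir:
  assumes "ord_ge (\<lambda>h. hom_eval 3 c (p + h)) 4" "(e1,e2,e3) \<noteq> 0"
  shows "hom_eval 3 c (p + (x*e1, x*e2, x*e3)) = 0"
proof -
  obtain p1 p2 p3 where p: "p = (p1,p2,p3)" by (cases p) auto
  obtain P where P: "degree P \<le> 3" "\<And>x. hom_eval 3 c ((p1,p2,p3) + (x*e1, x*e2, x*e3)) = poly P x"
    using hom_line_poly by blast
  have "coeff P k = 0" for k
  proof (cases "k < 4")
    case True
    show ?thesis
      by (rule extract3[OF assms(1) assms(2) _ True]) (simp add: P(2)[symmetric] p)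
  next
    case False then show ?thesis using P(1) by (simp add: coeff_eq_0)
  qed
  then have "P = 0" by (simp add: poly_eq_iff)
  then show ?thesis using P(2) p by simp
qed

lemma hom3_vanish:
  assumes "ord_ge (\<lambda>h. hom_eval 3 c (p + h)) 4"
  shows "hom_eval 3 c q = 0"
proof (cases "q = p")
  case True
  show ?thesis using hom3_vanish_dir[OF assms, of 1 0 0 0] True by (simp add: zero_prod_def[symmetric]) (simp add: zero_prod_def)
next
  case False
  obtain e1 e2 e3 where e: "q - p = (e1,e2,e3)" by (cases "q - p") auto
  have "(e1,e2,e3) \<noteq> 0" using e False by auto
  from hom3_vanish_dir[OF assms this, of 1] show ?thesis using e
    by (metis add.commute diff_add_cancel mult_1 prod.collapse)
qed



lemma hom_nonzero3: "hom_nonzero 3 c \<longleftrightarrow> (c 0 0 \<noteq> 0 \<or> c 0 1 \<noteq> 0 \<or> c 0 2 \<noteq> 0 \<or> c 0 3 \<noteq> 0 \<or>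
   c 1 0 \<noteq> 0 \<or> c 1 1 \<noteq> 0 \<or> c 1 2 \<noteq> 0 \<or> c 2 0 \<noteq> 0 \<or> c 2 1 \<noteq> 0 \<or> c 3 0 \<noteq> 0)"
proof
  assume "hom_nonzero 3 c"
  then obtain i j where ij: "i + j \<le> 3" "c i j \<noteq> 0" unfolding hom_nonzero_def by blast
  have "i \<le> 3" "j \<le> 3" using ij by auto
  then have "i \<in> {0,1,2,3}" "j \<in> {0,1,2,3}" by auto
  then show "(c 0 0 \<noteq> 0 \<or> c 0 1 \<noteq> 0 \<or> c 0 2 \<noteq> 0 \<or> c 0 3 \<noteq> 0 \<or>
   c 1 0 \<noteq> 0 \<or> c 1 1 \<noteq> 0 \<or> c 1 2 \<noteq> 0 \<or> c 2 0 \<noteq> 0 \<or> c 2 1 \<noteq> 0 \<or> c 3 0 \<noteq> 0)"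
    using ij by auto
next
  assume "(c 0 0 \<noteq> 0 \<or> c 0 1 \<noteq> 0 \<or> c 0 2 \<noteq> 0 \<or> c 0 3 \<noteq> 0 \<or>
   c 1 0 \<noteq> 0 \<or> c 1 1 \<noteq> 0 \<or> c 1 2 \<noteq> 0 \<or> c 2 0 \<noteq> 0 \<or> c 2 1 \<noteq> 0 \<or> c 3 0 \<noteq> 0)"
  moreover have H: "\<And>i j. c i j \<noteq> 0 \<Longrightarrow> i+j \<le> 3 \<Longrightarrow> hom_nonzero 3 c"
    unfolding hom_nonzero_def by blast
  ultimately show "hom_nonzero 3 c"
    by (elim disjE) (erule H, simp)+
qed

lemma allzero_not_nonzero:
  assumes "\<And>q. hom_eval 3 c q = 0"
  shows "\<not> hom_nonzero 3 c"
proof -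
  define P where "P = [:c 3 0, c 2 1, c 1 2, c 0 3, c 2 0, c 1 1, c 0 2, 0, c 1 0, c 0 1, 0, 0, c 0 0:]"
  have "poly P x = hom_eval 3 c (1, x, x^4)" for x
    by (simp add: P_def hom3 algebra_simps power2_eq_square power3_eq_cube power4_eq_xxxx)
  then have "poly P = poly 0" using assms by (auto simp: fun_eq_iff)
  then have "P = 0" by (simp add: poly_eq_poly_eq_iff)
  then show ?thesis by (simp add: P_def hom_nonzero3)
qed

lemma pt_val:
  assumes "ord_ge (\<lambda>h. hom_eval n c (p + h)) m" "m \<ge> 1"
  shows "hom_eval n c p = 0"
proof -
  obtain p1 p2 p3 where p: "p = (p1,p2,p3)" by (cases p) auto
  obtain P where P: "degree P \<le> n" "\<And>x. hom_eval n c ((p1,p2,p3) + (x*1, x*0, x*0)) = poly P x"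
    using hom_line_poly by blast
  have "coeff P 0 = 0"
    by (rule extract3[OF assms(1), of 1 0 0]) (use assms(2) in \<open>auto simp: P(2)[symmetric] p zero_prod_def\<close>)
  moreover have "coeff P 0 = poly P 0" by (simp add: poly_0_coeff_0)
  ultimately show ?thesis using P(2)[of 0] p by (simp add: zero_prod_def[symmetric])
qed

lemma section1_facts:
  assumes "section_dL 1 c"
  shows "c 3 0 = 0" "c 0 3 = 0" "hom_nonzero 3 c"
proof -
  have "hom_eval 3 c P1 = 0" using pt_val[of 3 c P1 1] assms by (simp add: section_dL_def)
  then show "c 3 0 = 0" by (simp add: P1_def hom3)
  have "hom_eval 3 c P2 = 0" using pt_val[of 3 c P2 1] assms by (simp add: section_dL_def)
  then show "c 0 3 = 0" by (simp add: P2_def hom3)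
  show "hom_nonzero 3 c" using assms by (simp add: section_dL_def)
qed

lemma const_ord2:
  fixes a :: complex
  assumes "ord_ge (\<lambda>h::complex\<times>complex. a) m" "m \<ge> 1"
  shows "a = 0"
proof -
  have "coeff [:a:] 0 = 0"
    by (rule extract2[where u=0, OF assms(1)]) (use assms(2) in auto)
  then show ?thesis by simp
qed

lemma const_ord3:
  fixes a :: complex
  assumes "ord_ge (\<lambda>h::c3. a) m" "m \<ge> 1"
  shows "a = 0"
proof -
  have "coeff [:a:] 0 = 0"
    by (rule extract3[OF assms(1), of 1 0 0]) (use assms(2) in \<open>auto simp: zero_prod_def\<close>)
  then show ?thesis by simp
qed

lemma no_deg0:
  assumes "section_dL 0 c" "mult_ge 0 c Q m" "m \<ge> 1"
  shows False
proof -
  have h0: "hom_eval 0 c p = c 0 0" for p by (simp add: hom_eval_def split: prod.split)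
  have nz: "c 0 0 \<noteq> 0" using assms(1) by (simp add: section_dL_def hom_nonzero_def)
  show False
  proof (cases Q)
    case (Pt p)
    then have "ord_ge (\<lambda>h::c3. c 0 0) m" using assms(2) by (simp add: h0)
    then show False using const_ord3 nz assms(3) by blast
  next
    case (Ex1 w)
    then have "ord_ge (\<lambda>h::complex\<times>complex. c 0 0) m" using assms(2) by (simp add: h0 case_prod_unfold)
    then show False using const_ord2 nz assms(3) by blast
  next
    case (Ex2 w)
    then have "ord_ge (\<lambda>h::complex\<times>complex. c 0 0) m" using assms(2) by (simp add: h0 case_prod_unfold)
    then show False using const_ord2 nz assms(3) by blast
  qed
qed

lemma no_pt4:
  assumes "section_dL 1 c" "mult_ge 1 c (Pt p) 4"
  shows False
proof -
  have "ord_ge (\<lambda>h. hom_eval 3 c (p + h)) 4" using assms(2) by simp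
  then have "\<And>q. hom_eval 3 c q = 0" using hom3_vanish by blast
  then show False using allzero_not_nonzero section1_facts(3)[OF assms(1)] by blast
qed



lemma ord_ge_mono:
  assumes "ord_ge g m" "m' \<le> m"
  shows "ord_ge g m'"
proof -
  obtain C where ev: "eventually (\<lambda>h. norm (g h) \<le> C * norm h ^ m) (at 0)"
    using assms(1) unfolding ord_ge_def by blast
  have ev1: "eventually (\<lambda>h. norm h < 1) (at (0::'a))"
    using eventually_at[of "\<lambda>h. norm h < 1" 0 UNIV] by (auto simp: dist_norm intro!: exI[of _ 1])
  have "eventually (\<lambda>h. norm (g h) \<le> max C 0 * norm h ^ m') (at 0)"
    using ev ev1
  proof eventually_elim
    case (elim h)
    have "norm h ^ m \<le> norm h ^ m'"
      using elim(2) assms(2) by (simp add: power_decreasing)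
    then have "C * norm h ^ m \<le> max C 0 * norm h ^ m'"
      by (meson max.cobounded1 max.cobounded2 mult_mono norm_ge_zero order_trans zero_le_power mult_right_mono)
    then show ?case using elim(1) by linarith
  qed
  then show ?thesis unfolding ord_ge_def by blast
qed

lemma mult_ge_mono:
  assumes "mult_ge d c Q m" "m' \<le> m"
  shows "mult_ge d c Q m'"
  using assms by (cases Q) (auto intro: ord_ge_mono)

lemma ex1a_4:
  assumes "mult_ge 1 c (Ex1 (1,a)) 4" "c 3 0 = 0"
  shows "c 2 0 = 0 \<and> c 2 1 = 0 \<and> c 1 0 = 0 \<and> c 1 1 = 0 \<and> c 1 2 = 0 \<and>
    c 0 3 + c 0 2 * a + c 0 1 * a^2 + c 0 0 * a^3 = 0 \<and> c 0 2 + 2 * c 0 1 * a + 3 * c 0 0 * a^2 = 0"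
proof -
  have k0: "c 2 0 * a + c 2 1 = 0" using e1a_coeffs[where k=0 and u=0, OF assms] by simp
  have k10: "c 1 0 * a ^ 2 + c 1 1 * a + c 1 2 = 0" using e1a_coeffs[where k="Suc 0" and u=0, OF assms] by simp
  have k11: "c 1 0 * a ^ 2 + c 1 1 * a + c 1 2 + c 2 0 = 0" using e1a_coeffs[where k="Suc 0" and u=1, OF assms] by simp
  have k20: "c 0 0 * a ^ 3 + c 0 1 * a ^ 2 + c 0 2 * a + c 0 3 = 0" using e1a_coeffs[where k="Suc (Suc 0)" and u=0, OF assms] by simp
  have k21: "c 0 0 * a ^ 3 + c 0 1 * a ^ 2 + c 0 2 * a + c 0 3 + 2 * c 1 0 * a + c 1 1 = 0" using e1a_coeffs[where k="Suc (Suc 0)" and u=1, OF assms] by simp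
  have k31: "3 * c 0 0 * a ^ 2 + 2 * c 0 1 * a + c 0 2 + c 1 0 = 0" using e1a_coeffs[where k="Suc (Suc (Suc 0))" and u=1, OF assms] by simp
  have k3m: "- (3 * c 0 0 * a ^ 2) - 2 * c 0 1 * a - c 0 2 + c 1 0 = 0" using e1a_coeffs[where k="Suc (Suc (Suc 0))" and u="-1", OF assms] by simp
  show ?thesis using k0 k10 k11 k20 k21 k31 k3m by algebra
qed

lemma ex1a_5:
  assumes "mult_ge 1 c (Ex1 (1,a)) 5" "c 3 0 = 0"
  shows "3 * c 0 0 * a + c 0 1 = 0"
  using e1a_coeffs[where k="Suc (Suc (Suc (Suc 0)))" and u=1, OF assms] by simp

lemma ex1b_4:
  assumes "mult_ge 1 c (Ex1 (0,1)) 4" "c 3 0 = 0"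
  shows "c 2 0 = 0 \<and> c 2 1 = 0 \<and> c 1 0 = 0 \<and> c 1 1 = 0 \<and> c 1 2 = 0 \<and> c 0 0 = 0 \<and> c 0 1 = 0"
proof -
  have k0: "c 2 0 = 0" using e1b_coeffs[where k=0 and u=0, OF assms] by simp
  have k1: "c 1 0 + c 2 1 = 0" using e1b_coeffs[where k="Suc 0" and u=1, OF assms] by simp
  have k10: "c 1 0 = 0" using e1b_coeffs[where k="Suc 0" and u=0, OF assms] by simp
  have k2: "c 0 0 + c 1 1 = 0" using e1b_coeffs[where k="Suc (Suc 0)" and u=1, OF assms] by simp
  have k20: "c 0 0 = 0" using e1b_coeffs[where k="Suc (Suc 0)" and u=0, OF assms] by simp
  have k31: "c 0 1 + c 1 2 = 0" using e1b_coeffs[where k="Suc (Suc (Suc 0))" and u=1, OF assms] by simp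
  have k3m: "- c 0 1 + c 1 2 = 0" using e1b_coeffs[where k="Suc (Suc (Suc 0))" and u="-1", OF assms] by simp
  show ?thesis using k0 k1 k10 k2 k20 k31 k3m by algebra
qed

lemma ex1b_5:
  assumes "mult_ge 1 c (Ex1 (0,1)) 5" "c 3 0 = 0"
  shows "c 0 2 = 0"
  using e1b_coeffs[where k="Suc (Suc (Suc (Suc 0)))" and u=1, OF assms] by simp

lemma ex2a_4:
  assumes "mult_ge 1 c (Ex2 (1,a)) 4" "c 0 3 = 0"
  shows "c 0 2 = 0 \<and> c 1 2 = 0 \<and> c 0 1 = 0 \<and> c 1 1 = 0 \<and> c 2 1 = 0 \<and>
    c 3 0 + c 2 0 * a + c 1 0 * a^2 + c 0 0 * a^3 = 0 \<and> c 2 0 + 2 * c 1 0 * a + 3 * c 0 0 * a^2 = 0"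
proof -
  have k0: "c 0 2 * a + c 1 2 = 0" using e2a_coeffs[where k=0 and u=0, OF assms] by simp
  have k10: "c 0 1 * a ^ 2 + c 1 1 * a + c 2 1 = 0" using e2a_coeffs[where k="Suc 0" and u=0, OF assms] by simp
  have k11: "c 0 1 * a ^ 2 + c 0 2 + c 1 1 * a + c 2 1 = 0" using e2a_coeffs[where k="Suc 0" and u=1, OF assms] by simp
  have k20: "c 0 0 * a ^ 3 + c 1 0 * a ^ 2 + c 2 0 * a + c 3 0 = 0" using e2a_coeffs[where k="Suc (Suc 0)" and u=0, OF assms] by simp
  have k21: "c 0 0 * a ^ 3 + 2 * c 0 1 * a + c 1 0 * a ^ 2 + c 1 1 + c 2 0 * a + c 3 0 = 0" using e2a_coeffs[where k="Suc (Suc 0)" and u=1, OF assms] by simp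
  have k31: "3 * c 0 0 * a ^ 2 + c 0 1 + 2 * c 1 0 * a + c 2 0 = 0" using e2a_coeffs[where k="Suc (Suc (Suc 0))" and u=1, OF assms] by simp
  have k3m: "- (3 * c 0 0 * a ^ 2) + c 0 1 - 2 * c 1 0 * a - c 2 0 = 0" using e2a_coeffs[where k="Suc (Suc (Suc 0))" and u="-1", OF assms] by simp
  show ?thesis using k0 k10 k11 k20 k21 k31 k3m by algebra
qed

lemma ex2a_5:
  assumes "mult_ge 1 c (Ex2 (1,a)) 5" "c 0 3 = 0"
  shows "3 * c 0 0 * a + c 1 0 = 0"
  using e2a_coeffs[where k="Suc (Suc (Suc (Suc 0)))" and u=1, OF assms] by simp

lemma ex2b_4:
  assumes "mult_ge 1 c (Ex2 (0,1)) 4" "c 0 3 = 0"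
  shows "c 0 2 = 0 \<and> c 1 2 = 0 \<and> c 0 1 = 0 \<and> c 1 1 = 0 \<and> c 2 1 = 0 \<and> c 0 0 = 0 \<and> c 1 0 = 0"
proof -
  have k0: "c 0 2 = 0" using e2b_coeffs[where k=0 and u=0, OF assms] by simp
  have k1: "c 0 1 + c 1 2 = 0" using e2b_coeffs[where k="Suc 0" and u=1, OF assms] by simp
  have k10: "c 0 1 = 0" using e2b_coeffs[where k="Suc 0" and u=0, OF assms] by simp
  have k2: "c 0 0 + c 1 1 = 0" using e2b_coeffs[where k="Suc (Suc 0)" and u=1, OF assms] by simp
  have k20: "c 0 0 = 0" using e2b_coeffs[where k="Suc (Suc 0)" and u=0, OF assms] by simp
  have k31: "c 1 0 + c 2 1 = 0" using e2b_coeffs[where k="Suc (Suc (Suc 0))" and u=1, OF assms] by simp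
  have k3m: "- c 1 0 + c 2 1 = 0" using e2b_coeffs[where k="Suc (Suc (Suc 0))" and u="-1", OF assms] by simp
  show ?thesis using k0 k1 k10 k2 k20 k31 k3m by algebra
qed

lemma ex2b_5:
  assumes "mult_ge 1 c (Ex2 (0,1)) 5" "c 0 3 = 0"
  shows "c 2 0 = 0"
  using e2b_coeffs[where k="Suc (Suc (Suc (Suc 0)))" and u=1, OF assms] by simp



lemma ord_ge_factor:
  fixes g :: "'a::real_normed_vector \<Rightarrow> complex"
  assumes "\<And>h. norm (g h) \<le> norm h ^ m * norm (r h)" "isCont r 0"
  shows "ord_ge g m"
proof -
  have "((\<lambda>h. norm (r h)) \<longlongrightarrow> norm (r 0)) (at 0)"
    using assms(2) by (auto intro!: tendsto_intros simp: isCont_def)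
  then have ev: "eventually (\<lambda>h. norm (r h) < norm (r 0) + 1) (at 0)"
    by (rule order_tendstoD) simp
  have "eventually (\<lambda>h. norm (g h) \<le> (norm (r 0) + 1) * norm h ^ m) (at 0)"
    using ev
  proof eventually_elim
    case (elim h)
    have "norm h ^ m * norm (r h) \<le> norm h ^ m * (norm (r 0) + 1)"
      using elim by (intro mult_left_mono) auto
    then show ?case using assms(1)[of h] by (simp add: algebra_simps)
  qed
  then show ?thesis unfolding ord_ge_def by blast
qed

lemma ord3:
  fixes g :: "c3 \<Rightarrow> complex"
  assumes "\<And>h1 h2 h3. g (h1,h2,h3) = h3^m * r (h1,h2,h3)" "isCont r 0"
  shows "ord_ge g m"
proof (rule ord_ge_factor[OF _ assms(2)])
  fix h :: c3
  obtain h1 h2 h3 where h: "h = (h1,h2,h3)" by (cases h) auto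
  have "norm h3 \<le> norm h" unfolding h
    by (meson norm_snd_le order_trans)
  then have "norm h3 ^ m \<le> norm h ^ m" by (simp add: power_mono)
  then show "norm (g h) \<le> norm h ^ m * norm (r h)"
    unfolding h assms(1) by (simp add: norm_mult norm_power mult_right_mono)
qed

lemma ord2:
  fixes g :: "complex \<times> complex \<Rightarrow> complex"
  assumes "\<And>s t. s \<noteq> 0 \<Longrightarrow> g (s,t) = s^p * t^q * r (s,t)" "\<And>t. g (0,t) = 0" "isCont r 0"
  shows "ord_ge g (p+q)"
proof (rule ord_ge_factor[OF _ assms(3)])
  fix h :: "complex \<times> complex"
  obtain s t where h: "h = (s,t)" by (cases h) auto
  show "norm (g h) \<le> norm h ^ (p+q) * norm (r h)"
  proof (cases "s = 0")
    case True then show ?thesis using assms(2) h by simp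
  next
    case False
    have "norm s \<le> norm h" "norm t \<le> norm h" unfolding h by (rule norm_fst_le, rule norm_snd_le)
    then have "norm s ^ p * norm t ^ q \<le> norm h ^ p * norm h ^ q"
      by (intro mult_mono power_mono) auto
    then have "norm s ^ p * norm t ^ q * norm (r h) \<le> norm h ^ (p+q) * norm (r h)"
      by (simp add: power_add mult_right_mono)
    then show ?thesis using False h assms(1) by (simp add: norm_mult norm_power)
  qed
qed

definition cA :: "complex \<Rightarrow> complex \<Rightarrow> nat \<Rightarrow> nat \<Rightarrow> complex" where
  "cA b a = (\<lambda>i j. if i = 0 then (if j = 0 then b^2 else if j = 1 then -2*b*a else if j = 2 then a^2 else 0) else 0)"
definition cB :: "complex \<Rightarrow> complex \<Rightarrow> nat \<Rightarrow> nat \<Rightarrow> complex" where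
  "cB b a = (\<lambda>i j. if j = 0 then (if i = 0 then b^2 else if i = 1 then -2*b*a else if i = 2 then a^2 else 0) else 0)"

lemma cA_eval: "hom_eval 3 (cA b a) (x,y,z) = z * (b*z - a*y)^2"
  by (simp add: hom3 cA_def power2_eq_square power3_eq_cube algebra_simps)
lemma cB_eval: "hom_eval 3 (cB b a) (x,y,z) = z * (b*z - a*x)^2"
  by (simp add: hom3 cB_def power2_eq_square power3_eq_cube algebra_simps)

lemma cA_section: assumes "(b,a) \<noteq> (0,0)" shows "section_dL 1 (cA b a)"
proof -
  have "hom_nonzero 3 (cA b a)" using assms by (auto simp: hom_nonzero3 cA_def)
  moreover have "ord_ge (\<lambda>h. hom_eval 3 (cA b a) (P1 + h)) 1"
    by (rule ord3[where r="\<lambda>h. (b * snd (snd h) - a * fst (snd h))^2"])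
       (auto simp: P1_def cA_eval intro!: continuous_intros)
  moreover have "ord_ge (\<lambda>h. hom_eval 3 (cA b a) (P2 + h)) 1"
    by (rule ord3[where r="\<lambda>h. (b * snd (snd h) - a * (1 + fst (snd h)))^2"])
       (auto simp: P2_def cA_eval intro!: continuous_intros)
  ultimately show ?thesis by (simp add: section_dL_def)
qed

lemma cB_section: assumes "(b,a) \<noteq> (0,0)" shows "section_dL 1 (cB b a)"
proof -
  have "hom_nonzero 3 (cB b a)" using assms by (auto simp: hom_nonzero3 cB_def)
  moreover have "ord_ge (\<lambda>h. hom_eval 3 (cB b a) (P1 + h)) 1"
    by (rule ord3[where r="\<lambda>h. (b * snd (snd h) - a * (1 + fst h))^2"])
       (auto simp: P1_def cB_eval intro!: continuous_intros)
  moreover have "ord_ge (\<lambda>h. hom_eval 3 (cB b a) (P2 + h)) 1"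
    by (rule ord3[where r="\<lambda>h. (b * snd (snd h) - a * fst h)^2"])
       (auto simp: P2_def cB_eval intro!: continuous_intros)
  ultimately show ?thesis by (simp add: section_dL_def)
qed

lemma cA_mult_a: "mult_ge 1 (cA 1 a) (Ex1 (1,a)) 4"
proof -
  have "ord_ge (\<lambda>(s,t). hom_eval 3 (cA 1 a) (P1 + smul3 s (dir1 (1,a)) + smul3 (s*t) (cmp1 (1,a))) / s) (2+2)"
    apply (rule ord2[where r="\<lambda>h. a + snd h"])
    subgoal by (simp add: P1_def cA_eval smul3_def dir1_def cmp1_def divide_eq_eq) (simp add: algebra_simps power2_eq_square power3_eq_cube power4_eq_xxxx)
    subgoal by simp
    subgoal by (intro continuous_intros)
    done
  then show ?thesis by simp
qed

lemma cA_mult_b: "mult_ge 1 (cA 0 1) (Ex1 (0,1)) 4"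
proof -
  have "ord_ge (\<lambda>(s,t). hom_eval 3 (cA 0 1) (P1 + smul3 s (dir1 (0,1)) + smul3 (s*t) (cmp1 (0,1))) / s) (2+2)"
    apply (rule ord2[where r="\<lambda>h. 1"])
    subgoal by (simp add: P1_def P2_def cA_eval smul3_def dir1_def cmp1_def dir2_def cmp2_def divide_eq_eq) (simp add: algebra_simps power2_eq_square power3_eq_cube power4_eq_xxxx)
    subgoal by simp
    subgoal by (intro continuous_intros)
    done
  then show ?thesis by (auto intro: ord_ge_mono)
qed

lemma cA_mult_a0: "mult_ge 1 (cA 1 0) (Ex1 (1,0)) 5"
proof -
  have "ord_ge (\<lambda>(s,t). hom_eval 3 (cA 1 0) (P1 + smul3 s (dir1 (1,0)) + smul3 (s*t) (cmp1 (1,0))) / s) (2+3)"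
    apply (rule ord2[where r="\<lambda>h. 1"])
    subgoal by (simp add: P1_def P2_def cA_eval smul3_def dir1_def cmp1_def dir2_def cmp2_def divide_eq_eq) (simp add: algebra_simps power2_eq_square power3_eq_cube power4_eq_xxxx)
    subgoal by simp
    subgoal by (intro continuous_intros)
    done
  then show ?thesis by (auto intro: ord_ge_mono)
qed

lemma cB_mult_a: "mult_ge 1 (cB 1 a) (Ex2 (1,a)) 4"
proof -
  have "ord_ge (\<lambda>(s,t). hom_eval 3 (cB 1 a) (P2 + smul3 s (dir2 (1,a)) + smul3 (s*t) (cmp2 (1,a))) / s) (2+2)"
    apply (rule ord2[where r="\<lambda>h. a + snd h"])
    subgoal by (simp add: P1_def P2_def cB_eval smul3_def dir1_def cmp1_def dir2_def cmp2_def divide_eq_eq) (simp add: algebra_simps power2_eq_square power3_eq_cube power4_eq_xxxx)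
    subgoal by simp
    subgoal by (intro continuous_intros)
    done
  then show ?thesis by (auto intro: ord_ge_mono)
qed

lemma cB_mult_b: "mult_ge 1 (cB 0 1) (Ex2 (0,1)) 4"
proof -
  have "ord_ge (\<lambda>(s,t). hom_eval 3 (cB 0 1) (P2 + smul3 s (dir2 (0,1)) + smul3 (s*t) (cmp2 (0,1))) / s) (2+2)"
    apply (rule ord2[where r="\<lambda>h. 1"])
    subgoal by (simp add: P1_def P2_def cB_eval smul3_def dir1_def cmp1_def dir2_def cmp2_def divide_eq_eq) (simp add: algebra_simps power2_eq_square power3_eq_cube power4_eq_xxxx)
    subgoal by simp
    subgoal by (intro continuous_intros)
    done
  then show ?thesis by (auto intro: ord_ge_mono)
qed

lemma cA_mult_E2: "mult_ge 1 (cA 1 0) (Ex2 (1,0)) 5"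
proof -
  have "ord_ge (\<lambda>(s,t). hom_eval 3 (cA 1 0) (P2 + smul3 s (dir2 (1,0)) + smul3 (s*t) (cmp2 (1,0))) / s) (2+3)"
    apply (rule ord2[where r="\<lambda>h. 1"])
    subgoal by (simp add: P1_def P2_def cA_eval smul3_def dir1_def cmp1_def dir2_def cmp2_def divide_eq_eq) (simp add: algebra_simps power2_eq_square power3_eq_cube power4_eq_xxxx)
    subgoal by simp
    subgoal by (intro continuous_intros)
    done
  then show ?thesis by (auto intro: ord_ge_mono)
qed

definition dA :: "complex \<Rightarrow> complex \<Rightarrow> nat \<Rightarrow> nat \<Rightarrow> complex" where
  "dA b a = (\<lambda>i j. if i = 0 then (if j = 0 then b^4 else if j = 1 then -4*b^3*a else if j = 2 then 6*b^2*a^2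
     else if j = 3 then -4*b*a^3 else if j = 4 then a^4 else 0) else 0)"
definition dB :: "complex \<Rightarrow> complex \<Rightarrow> nat \<Rightarrow> nat \<Rightarrow> complex" where
  "dB b a = (\<lambda>i j. if j = 0 then (if i = 0 then b^4 else if i = 1 then -4*b^3*a else if i = 2 then 6*b^2*a^2
     else if i = 3 then -4*b*a^3 else if i = 4 then a^4 else 0) else 0)"

lemma dA_eval: "hom_eval 6 (dA b a) (x,y,z) = z^2 * (b*z - a*y)^4"
  by (simp add: hom_eval_def dA_def numeral_eq_Suc atMost_Suc) (simp add: algebra_simps power2_eq_square power3_eq_cube power4_eq_xxxx)
lemma dB_eval: "hom_eval 6 (dB b a) (x,y,z) = z^2 * (b*z - a*x)^4"
  by (simp add: hom_eval_def dB_def numeral_eq_Suc atMost_Suc) (simp add: algebra_simps power2_eq_square power3_eq_cube power4_eq_xxxx)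

lemma dA_section: assumes "(b,a) \<noteq> (0,0)" shows "section_dL 2 (dA b a)"
proof -
  have "hom_nonzero 6 (dA b a)"
  proof (cases "b = 0")
    case True
    then have "a \<noteq> 0" using assms by simp
    then show ?thesis unfolding hom_nonzero_def using True
      by (intro exI[of _ 0] exI[of _ 4]) (simp add: dA_def)
  next
    case False
    then show ?thesis unfolding hom_nonzero_def
      by (intro exI[of _ 0] exI[of _ 0]) (simp add: dA_def)
  qed
  moreover have "ord_ge (\<lambda>h. hom_eval 6 (dA b a) (P1 + h)) 2"
    by (rule ord3[where r="\<lambda>h. (b * snd (snd h) - a * fst (snd h))^4"])
       (auto simp: P1_def dA_eval intro!: continuous_intros)
  moreover have "ord_ge (\<lambda>h. hom_eval 6 (dA b a) (P2 + h)) 2"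
    by (rule ord3[where r="\<lambda>h. (b * snd (snd h) - a * (1 + fst (snd h)))^4"])
       (auto simp: P2_def dA_eval intro!: continuous_intros)
  ultimately show ?thesis by (simp add: section_dL_def)
qed

lemma dB_section: assumes "(b,a) \<noteq> (0,0)" shows "section_dL 2 (dB b a)"
proof -
  have "hom_nonzero 6 (dB b a)"
  proof (cases "b = 0")
    case True
    then have "a \<noteq> 0" using assms by simp
    then show ?thesis unfolding hom_nonzero_def using True
      by (intro exI[of _ 0] exI[of _ 4]) (simp add: dB_def)
  next
    case False
    then show ?thesis unfolding hom_nonzero_def
      by (intro exI[of _ 0] exI[of _ 0]) (simp add: dB_def)
  qed
  moreover have "ord_ge (\<lambda>h. hom_eval 6 (dB b a) (P1 + h)) 2"
    by (rule ord3[where r="\<lambda>h. (b * snd (snd h) - a * (1 + fst h))^4"])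
       (auto simp: P1_def dB_eval intro!: continuous_intros)
  moreover have "ord_ge (\<lambda>h. hom_eval 6 (dB b a) (P2 + h)) 2"
    by (rule ord3[where r="\<lambda>h. (b * snd (snd h) - a * fst h)^4"])
       (auto simp: P2_def dB_eval intro!: continuous_intros)
  ultimately show ?thesis by (simp add: section_dL_def)
qed

lemma dA_mult_a: "mult_ge 2 (dA 1 a) (Ex1 (1,a)) 5"
proof -
  have "ord_ge (\<lambda>(s,t). hom_eval 6 (dA 1 a) (P1 + smul3 s (dir1 (1,a)) + smul3 (s*t) (cmp1 (1,a))) / s^2) (4+4)"
    apply (rule ord2[where r="\<lambda>h. (a + snd h)^2"])
    subgoal by (simp add: P1_def P2_def dA_eval smul3_def dir1_def cmp1_def dir2_def cmp2_def divide_eq_eq) (simp add: algebra_simps power2_eq_square power3_eq_cube power4_eq_xxxx)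
    subgoal by simp
    subgoal by (intro continuous_intros)
    done
  then show ?thesis by (auto intro: ord_ge_mono)
qed

lemma dA_mult_b: "mult_ge 2 (dA 0 1) (Ex1 (0,1)) 5"
proof -
  have "ord_ge (\<lambda>(s,t). hom_eval 6 (dA 0 1) (P1 + smul3 s (dir1 (0,1)) + smul3 (s*t) (cmp1 (0,1))) / s^2) (4+4)"
    apply (rule ord2[where r="\<lambda>h. 1"])
    subgoal by (simp add: P1_def P2_def dA_eval smul3_def dir1_def cmp1_def dir2_def cmp2_def divide_eq_eq) (simp add: algebra_simps power2_eq_square power3_eq_cube power4_eq_xxxx)
    subgoal by simp
    subgoal by (intro continuous_intros)
    done
  then show ?thesis by (auto intro: ord_ge_mono)
qed

lemma dB_mult_a: "mult_ge 2 (dB 1 a) (Ex2 (1,a)) 5"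
proof -
  have "ord_ge (\<lambda>(s,t). hom_eval 6 (dB 1 a) (P2 + smul3 s (dir2 (1,a)) + smul3 (s*t) (cmp2 (1,a))) / s^2) (4+4)"
    apply (rule ord2[where r="\<lambda>h. (a + snd h)^2"])
    subgoal by (simp add: P1_def P2_def dB_eval smul3_def dir1_def cmp1_def dir2_def cmp2_def divide_eq_eq) (simp add: algebra_simps power2_eq_square power3_eq_cube power4_eq_xxxx)
    subgoal by simp
    subgoal by (intro continuous_intros)
    done
  then show ?thesis by (auto intro: ord_ge_mono)
qed

lemma dB_mult_b: "mult_ge 2 (dB 0 1) (Ex2 (0,1)) 5"
proof -
  have "ord_ge (\<lambda>(s,t). hom_eval 6 (dB 0 1) (P2 + smul3 s (dir2 (0,1)) + smul3 (s*t) (cmp2 (0,1))) / s^2) (4+4)"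
    apply (rule ord2[where r="\<lambda>h. 1"])
    subgoal by (simp add: P1_def P2_def dB_eval smul3_def dir1_def cmp1_def dir2_def cmp2_def divide_eq_eq) (simp add: algebra_simps power2_eq_square power3_eq_cube power4_eq_xxxx)
    subgoal by simp
    subgoal by (intro continuous_intros)
    done
  then show ?thesis by (auto intro: ord_ge_mono)
qed



lemma normP1_cases: "normP1 w \<Longrightarrow> (\<exists>a. w = (1,a)) \<or> w = (0,1)"
  by (cases w) (auto simp: normP1_def)

lemma allzero_contra:
  assumes "hom_nonzero 3 c" "c 0 0 = 0" "c 0 1 = 0" "c 0 2 = 0" "c 0 3 = 0" "c 1 0 = 0" "c 1 1 = 0"
    "c 1 2 = 0" "c 2 0 = 0" "c 2 1 = 0" "c 3 0 = 0"
  shows False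
  using assms by (simp add: hom_nonzero3)

lemma quad_kill:
  fixes a a' c0 c1 c2 :: complex
  assumes "a \<noteq> 0" "a \<noteq> a'"
    "c2 * a + c1 * a^2 + c0 * a^3 = 0" "c2 + 2 * c1 * a + 3 * c0 * a^2 = 0"
    "c2 * a' + c1 * a'^2 + c0 * a'^3 = 0" "c2 + 2 * c1 * a' + 3 * c0 * a'^2 = 0"
  shows "c0 = 0 \<and> c1 = 0 \<and> c2 = 0"
proof -
  have q: "c2 + c1 * a + c0 * a^2 = 0"
  proof -
    have "a * (c2 + c1 * a + c0 * a^2) = 0" using assms(3) by algebra
    then show ?thesis using assms(1) by (metis mult_eq_0_iff)
  qed
  have e1: "c1 = -2 * c0 * a"
  proof -
    have "a * (c1 + 2 * c0 * a) = 0" using q assms(4) by algebra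
    then have "c1 + 2 * c0 * a = 0" using assms(1) by (metis mult_eq_0_iff)
    then show ?thesis by algebra
  qed
  have e2: "c2 = c0 * a^2" using q e1 by algebra
  have "c0 = 0"
  proof (cases "a' = 0")
    case True
    then have "c0 * a^2 = 0" using assms(6) e2 by simp
    then show ?thesis using assms(1) by simp
  next
    case False
    have "c0 * (a' * (a' - a)^2) = 0" using assms(5) e1 e2 by algebra
    then show ?thesis using False assms(2) by simp
  qed
  then show ?thesis using e1 e2 by simp
qed

lemma pairE1E1:
  assumes "section_dL 1 c" "mult_ge 1 c (Ex1 w) 4" "mult_ge 1 c (Ex1 w') 4"
    "normP1 w" "normP1 w'" "w \<noteq> (1,0)" "w \<noteq> w'"
  shows False
proof -
  note s = section1_facts[OF assms(1)]
  consider (A) a where "w = (1,a)" "a \<noteq> 0" | (B) "w = (0,1)" using normP1_cases[OF assms(4)] assms(6) by blast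
  then show False
  proof cases
    case (A a)
    note fa = ex1a_4[OF assms(2)[unfolded A] s(1)]
    consider (A') a' where "w' = (1,a')" | (B') "w' = (0,1)" using normP1_cases[OF assms(5)] by blast
    then show False
    proof cases
      case (A' a')
      note fa' = ex1a_4[OF assms(3)[unfolded A'] s(1)]
      have "a \<noteq> a'" using A A' assms(7) by auto
      then have "c 0 0 = 0 \<and> c 0 1 = 0 \<and> c 0 2 = 0"
        using quad_kill[of a a' "c 0 2" "c 0 1" "c 0 0"] fa fa' A s by simp
      then show False using allzero_contra[OF s(3)] fa s by simp
    next
      case B'
      note fb = ex1b_4[OF assms(3)[unfolded B'] s(1)]
      show False using allzero_contra[OF s(3)] fa fb s by simp
    qed
  next
    case B
    note fb = ex1b_4[OF assms(2)[unfolded B] s(1)]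
    obtain a' where A': "w' = (1,a')" using normP1_cases[OF assms(5)] assms(7) B by blast
    note fa' = ex1a_4[OF assms(3)[unfolded A'] s(1)]
    show False using allzero_contra[OF s(3)] fa' fb s by simp
  qed
qed

lemma pairE2E2:
  assumes "section_dL 1 c" "mult_ge 1 c (Ex2 w) 4" "mult_ge 1 c (Ex2 w') 4"
    "normP1 w" "normP1 w'" "w \<noteq> (1,0)" "w \<noteq> w'"
  shows False
proof -
  note s = section1_facts[OF assms(1)]
  consider (A) a where "w = (1,a)" "a \<noteq> 0" | (B) "w = (0,1)" using normP1_cases[OF assms(4)] assms(6) by blast
  then show False
  proof cases
    case (A a)
    note fa = ex2a_4[OF assms(2)[unfolded A] s(2)]
    consider (A') a' where "w' = (1,a')" | (B') "w' = (0,1)" using normP1_cases[OF assms(5)] by blast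
    then show False
    proof cases
      case (A' a')
      note fa' = ex2a_4[OF assms(3)[unfolded A'] s(2)]
      have "a \<noteq> a'" using A A' assms(7) by auto
      then have "c 0 0 = 0 \<and> c 1 0 = 0 \<and> c 2 0 = 0"
        using quad_kill[of a a' "c 2 0" "c 1 0" "c 0 0"] fa fa' A s by simp
      then show False using allzero_contra[OF s(3)] fa s by simp
    next
      case B'
      note fb = ex2b_4[OF assms(3)[unfolded B'] s(2)]
      show False using allzero_contra[OF s(3)] fa fb s by simp
    qed
  next
    case B
    note fb = ex2b_4[OF assms(2)[unfolded B] s(2)]
    obtain a' where A': "w' = (1,a')" using normP1_cases[OF assms(5)] assms(7) B by blast
    note fa' = ex2a_4[OF assms(3)[unfolded A'] s(2)]
    show False using allzero_contra[OF s(3)] fa' fb s by simp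
  qed
qed

lemma pairE1E2:
  assumes "section_dL 1 c" "mult_ge 1 c (Ex1 w) 4" "mult_ge 1 c (Ex2 w') 4"
    "normP1 w" "normP1 w'" "w \<noteq> (1,0) \<or> w' \<noteq> (1,0)"
  shows False
proof -
  note s = section1_facts[OF assms(1)]
  have g1: "c 2 0 = 0 \<and> c 2 1 = 0 \<and> c 1 0 = 0 \<and> c 1 1 = 0 \<and> c 1 2 = 0 \<and>
      (\<forall>a. w = (1,a) \<longrightarrow> c 0 3 + c 0 2 * a + c 0 1 * a^2 + c 0 0 * a^3 = 0) \<and> (w = (0,1) \<longrightarrow> c 0 0 = 0)"
  proof -
    consider (A) a where "w = (1,a)" | (B) "w = (0,1)" using normP1_cases[OF assms(4)] by blast
    then show ?thesis
    proof cases
      case (A a)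
      note fa = ex1a_4[OF assms(2)[unfolded A] s(1)]
      show ?thesis using fa A by auto
    next
      case B
      note fb = ex1b_4[OF assms(2)[unfolded B] s(1)]
      show ?thesis using fb B by auto
    qed
  qed
  have g2: "c 0 2 = 0 \<and> c 1 2 = 0 \<and> c 0 1 = 0 \<and> c 1 1 = 0 \<and> c 2 1 = 0 \<and>
      (\<forall>a. w' = (1,a) \<longrightarrow> c 0 0 * a^3 + c 3 0 + c 2 0 * a + c 1 0 * a^2 = 0) \<and> (w' = (0,1) \<longrightarrow> c 0 0 = 0)"
  proof -
    consider (A) a where "w' = (1,a)" | (B) "w' = (0,1)" using normP1_cases[OF assms(5)] by blast
    then show ?thesis
    proof cases
      case (A a)
      note fa = ex2a_4[OF assms(3)[unfolded A] s(2)]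
      show ?thesis using fa A by (auto simp: algebra_simps)
    next
      case B
      note fb = ex2b_4[OF assms(3)[unfolded B] s(2)]
      show ?thesis using fb B by auto
    qed
  qed
  have "c 0 0 = 0"
  proof (cases "w \<noteq> (1,0)")
    case True
    then consider (A) a where "w = (1,a)" "a \<noteq> 0" | (B) "w = (0,1)" using normP1_cases[OF assms(4)] by blast
    then show ?thesis using g1 g2 s by cases auto
  next
    case False
    then have "w' \<noteq> (1,0)" using assms(6) by blast
    then consider (A) a where "w' = (1,a)" "a \<noteq> 0" | (B) "w' = (0,1)" using normP1_cases[OF assms(5)] by blast
    then show ?thesis using g1 g2 s by cases auto
  qed
  then show False using allzero_contra[OF s(3)] g1 g2 s by simp
qed



lemma no5_E1:
  assumes "section_dL 1 c" "mult_ge 1 c (Ex1 w) 5" "normP1 w" "w \<noteq> (1,0)"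
  shows False
proof -
  note s = section1_facts[OF assms(1)]
  have m4: "mult_ge 1 c (Ex1 w) 4" using mult_ge_mono[OF assms(2)] by simp
  consider (A) a where "w = (1,a)" "a \<noteq> 0" | (B) "w = (0,1)" using normP1_cases[OF assms(3)] assms(4) by blast
  then show False
  proof cases
    case (A a)
    note f = ex1a_4[OF m4[unfolded A] s(1)]
    note g = ex1a_5[OF assms(2)[unfolded A] s(1)]
    have "c 0 0 = 0 \<and> c 0 1 = 0 \<and> c 0 2 = 0"
      using quad_kill[of a "a + 1" "c 0 2" "c 0 1" "c 0 0"] f g A s
    proof -
      have q: "a * (c 0 2 + c 0 1 * a + c 0 0 * a^2) = 0" using f s by algebra
      then have q': "c 0 2 + c 0 1 * a + c 0 0 * a^2 = 0" using A by (metis mult_eq_0_iff)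
      have "a * (c 0 0 * a) = 0" using q' f g by algebra
      then have "c 0 0 = 0" using A by simp
      then show ?thesis using q' f g by algebra
    qed
    then show False using allzero_contra[OF s(3)] f s by simp
  next
    case B
    note f = ex1b_4[OF m4[unfolded B] s(1)]
    note g = ex1b_5[OF assms(2)[unfolded B] s(1)]
    show False using allzero_contra[OF s(3)] f g s by simp
  qed
qed

lemma no5_E2:
  assumes "section_dL 1 c" "mult_ge 1 c (Ex2 w) 5" "normP1 w" "w \<noteq> (1,0)"
  shows False
proof -
  note s = section1_facts[OF assms(1)]
  have m4: "mult_ge 1 c (Ex2 w) 4" using mult_ge_mono[OF assms(2)] by simp
  consider (A) a where "w = (1,a)" "a \<noteq> 0" | (B) "w = (0,1)" using normP1_cases[OF assms(3)] assms(4) by blast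
  then show False
  proof cases
    case (A a)
    note f = ex2a_4[OF m4[unfolded A] s(2)]
    note g = ex2a_5[OF assms(2)[unfolded A] s(2)]
    have "c 0 0 = 0 \<and> c 1 0 = 0 \<and> c 2 0 = 0"
    proof -
      have q: "a * (c 2 0 + c 1 0 * a + c 0 0 * a^2) = 0" using f s by algebra
      then have q': "c 2 0 + c 1 0 * a + c 0 0 * a^2 = 0" using A by (metis mult_eq_0_iff)
      have "a * (c 0 0 * a) = 0" using q' f g by algebra
      then have "c 0 0 = 0" using A by simp
      then show ?thesis using q' f g by algebra
    qed
    then show False using allzero_contra[OF s(3)] f s by simp
  next
    case B
    note f = ex2b_4[OF m4[unfolded B] s(2)]
    note g = ex2b_5[OF assms(2)[unfolded B] s(2)]
    show False using allzero_contra[OF s(3)] f g s by simp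
  qed
qed



lemma S2_cases: "Q \<in> S2 \<Longrightarrow> (\<exists>p. Q = Pt p) \<or> (\<exists>w. normP1 w \<and> (Q = Ex1 w \<or> Q = Ex2 w))"
  by (auto simp: S2_def)

lemma Ex1_L12t: "Ex1 w \<in> L12t \<longleftrightarrow> w = (1,0)" by (auto simp: L12t_def)
lemma Ex2_L12t: "Ex2 w \<in> L12t \<longleftrightarrow> w = (1,0)" by (auto simp: L12t_def)

theorem theorem4:
  fixes Z :: "s2pt set"
  assumes "finite Z" and "Z \<noteq> {}" and "Z \<subseteq> S2"
  shows "(\<exists>Q. Q \<in> (E1 \<union> E2) - L12t \<and> Z = {Q}) \<longleftrightarrow>
         (alpha 1 Z = 1 \<and> alpha 2 Z = 1 \<and> alpha 3 Z = 1 \<and> alpha 4 Z = 1 \<and> alpha 5 Z > 1)"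
proof -
  define S where "S m d \<longleftrightarrow> (\<exists>c. section_dL d c \<and> (\<forall>Q\<in>Z. mult_ge d c Q m))" for m d
  have alpha_S: "alpha m Z = (LEAST d. S m d)" for m by (simp add: alpha_def S_def)
  obtain Q0 where Q0: "Q0 \<in> Z" using assms(2) by blast
  have S0: "\<not> S m 0" if "m \<ge> 1" for m
    using no_deg0[of _ Q0 m] Q0 that unfolding S_def by blast
  have Smono: "S m' d" if "S m d" "m' \<le> m" for m m' d
    using that mult_ge_mono unfolding S_def by blast
  have a1: "alpha m Z = 1" if "S m 1" "m \<ge> 1" for m
    unfolding alpha_S
  proof (rule Least_equality)
    show "S m 1" by fact
    fix y assume "S m y" then show "1 \<le> y" using S0[OF that(2)] by (cases y) auto
  qed
  show ?thesis
  proof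
    assume "\<exists>Q. Q \<in> (E1 \<union> E2) - L12t \<and> Z = {Q}"
    then obtain Q where Q: "Q \<in> (E1 \<union> E2) - L12t" "Z = {Q}" by blast
    have key: "S 4 1 \<and> S 5 2 \<and> \<not> S 5 1"
    proof -
      obtain w where w: "normP1 w" "Q = Ex1 w \<or> Q = Ex2 w" using Q(1) by (auto simp: E1_def E2_def)
      have wn: "w \<noteq> (1,0)" using w(2) Q(1) by (auto simp: Ex1_L12t Ex2_L12t)
      from w(2) show ?thesis
      proof
        assume QE: "Q = Ex1 w"
        have n5: "\<not> S 5 1" unfolding S_def using no5_E1[OF _ _ w(1) wn] QE Q(2) by blast
        consider (A) a where "w = (1,a)" | (B) "w = (0,1)" using normP1_cases[OF w(1)] by blast
        then show ?thesis
        proof cases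
          case (A a)
          have "S 4 1" unfolding S_def using cA_section[of 1 a] cA_mult_a[of a] QE Q(2) A by auto
          moreover have "S 5 2" unfolding S_def using dA_section[of 1 a] dA_mult_a[of a] QE Q(2) A by auto
          ultimately show ?thesis using n5 by blast
        next
          case B
          have "S 4 1" unfolding S_def using cA_section[of 0 1] cA_mult_b QE Q(2) B by auto
          moreover have "S 5 2" unfolding S_def using dA_section[of 0 1] dA_mult_b QE Q(2) B by auto
          ultimately show ?thesis using n5 by blast
        qed
      next
        assume QE: "Q = Ex2 w"
        have n5: "\<not> S 5 1" unfolding S_def using no5_E2[OF _ _ w(1) wn] QE Q(2) by blast
        consider (A) a where "w = (1,a)" | (B) "w = (0,1)" using normP1_cases[OF w(1)] by blast
        then show ?thesis
        proof cases
          case (A a)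
          have "S 4 1" unfolding S_def using cB_section[of 1 a] cB_mult_a[of a] QE Q(2) A by auto
          moreover have "S 5 2" unfolding S_def using dB_section[of 1 a] dB_mult_a[of a] QE Q(2) A by auto
          ultimately show ?thesis using n5 by blast
        next
          case B
          have "S 4 1" unfolding S_def using cB_section[of 0 1] cB_mult_b QE Q(2) B by auto
          moreover have "S 5 2" unfolding S_def using dB_section[of 0 1] dB_mult_b QE Q(2) B by auto
          ultimately show ?thesis using n5 by blast
        qed
      qed
    qed
    have "alpha m Z = 1" if "1 \<le> m" "m \<le> 4" for m
      using a1[OF Smono[of 4 1 m]] key that by blast
    moreover have "alpha 5 Z > 1"
    proof -
      have A: "S 5 (alpha 5 Z)" unfolding alpha_S using key by (metis LeastI)
      have "alpha 5 Z \<noteq> 0"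
      proof
        assume "alpha 5 Z = 0" with A have "S 5 0" by simp
        then show False using S0[of 5] by simp
      qed
      moreover have "alpha 5 Z \<noteq> 1"
      proof
        assume "alpha 5 Z = 1" with A have "S 5 1" by simp
        then show False using key by simp
      qed
      ultimately show ?thesis by linarith
    qed
    ultimately show "alpha 1 Z = 1 \<and> alpha 2 Z = 1 \<and> alpha 3 Z = 1 \<and> alpha 4 Z = 1 \<and> alpha 5 Z > 1"
      by simp
  next
    assume R: "alpha 1 Z = 1 \<and> alpha 2 Z = 1 \<and> alpha 3 Z = 1 \<and> alpha 4 Z = 1 \<and> alpha 5 Z > 1"
    have ex4: "\<exists>d. S 4 d"
    proof (rule ccontr)
      assume n: "\<not> (\<exists>d. S 4 d)"
      then have "\<not> (\<exists>d. S 5 d)" using Smono[of 5 _ 4] by auto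
      then have "(\<lambda>d. S 4 d) = (\<lambda>d. S 5 d)" using n by auto
      then have "alpha 4 Z = alpha 5 Z" unfolding alpha_S by simp
      then show False using R by simp
    qed
    have "S 4 (alpha 4 Z)" unfolding alpha_S using ex4 by (metis LeastI)
    then have "S 4 1" using R by simp
    then obtain c where c: "section_dL 1 c" "\<And>Q. Q \<in> Z \<Longrightarrow> mult_ge 1 c Q 4" unfolding S_def by blast
    have n5: "\<not> S 5 1"
    proof
      assume "S 5 1"
      then have "alpha 5 Z \<le> 1" unfolding alpha_S by (rule Least_le)
      then show False using R by simp
    qed
    have pts: "\<exists>w. normP1 w \<and> (Q = Ex1 w \<or> Q = Ex2 w)" if "Q \<in> Z" for Q
    proof -
      have "Q \<in> S2" using that assms(3) by blast
      moreover have "Q \<noteq> Pt p" for p using no_pt4[OF c(1)] c(2)[OF that] by blast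
      ultimately show ?thesis using S2_cases by blast
    qed
    show "\<exists>Q. Q \<in> (E1 \<union> E2) - L12t \<and> Z = {Q}"
    proof (cases "\<exists>Q\<in>Z. Q \<notin> L12t")
      case True
      then obtain Q where Q: "Q \<in> Z" "Q \<notin> L12t" by blast
      obtain w where w: "normP1 w" "Q = Ex1 w \<or> Q = Ex2 w" using pts[OF Q(1)] by blast
      have wn: "w \<noteq> (1,0)" using w(2) Q(2) by (auto simp: Ex1_L12t Ex2_L12t)
      have "Q' = Q" if Q'Z: "Q' \<in> Z" for Q'
      proof (rule ccontr)
        assume ne: "Q' \<noteq> Q"
        obtain w' where w': "normP1 w'" "Q' = Ex1 w' \<or> Q' = Ex2 w'" using pts[OF Q'Z] by blast
        have m: "mult_ge 1 c Q 4" "mult_ge 1 c Q' 4" using c(2) Q(1) Q'Z by auto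
        show False
          using w(2) w'(2)
        proof (elim disjE)
          assume "Q = Ex1 w" "Q' = Ex1 w'"
          then show False using pairE1E1[OF c(1) _ _ w(1) w'(1) wn] m ne by auto
        next
          assume "Q = Ex1 w" "Q' = Ex2 w'"
          then show False using pairE1E2[OF c(1) _ _ w(1) w'(1)] m wn by auto
        next
          assume "Q = Ex2 w" "Q' = Ex1 w'"
          then show False using pairE1E2[OF c(1) _ _ w'(1) w(1)] m wn by auto
        next
          assume "Q = Ex2 w" "Q' = Ex2 w'"
          then show False using pairE2E2[OF c(1) _ _ w(1) w'(1) wn] m ne by auto
        qed
      qed
      then have "Z = {Q}" using Q(1) by blast
      moreover have "Q \<in> E1 \<union> E2" using w unfolding E1_def E2_def by blast
      ultimately show ?thesis using Q(2) by blast
    next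
      case False
      have "mult_ge 1 (cA 1 0) Q 5" if QZ: "Q \<in> Z" for Q
      proof -
        obtain w where w: "normP1 w" "Q = Ex1 w \<or> Q = Ex2 w" using pts[OF QZ] by blast
        have "Q \<in> L12t" using False QZ by blast
        then have "Q = Ex1 (1,0) \<or> Q = Ex2 (1,0)" using w(2) by (auto simp: Ex1_L12t Ex2_L12t)
        then show ?thesis using cA_mult_a0 cA_mult_E2 by auto
      qed
      then have "S 5 1" unfolding S_def using cA_section[of 1 0] by auto
      then show ?thesis using n5 by blast
    qed
  qed
qed

end
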